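(* Let $n\ge2$, $1\le k\le n-1$. Let $Y$ have a continuous distribution function $G$ on $[l_G,r_G]$, and let $g$ be positive, continuous and strictly decreasing on $(l_G,r_G)$ with $\lim_{y\to r_G^-}g(y)=0$; put $\tau=\lim_{y\to l_G^+}[g(y)]^{-1/(k+1)}$. Then \[ E[g(Y(n))\mid Y(n-k)=s,\ Y(n+1)=t]=[g(t)]^{k/(k+1)}[g(s)]^{1/(k+1)}\qquad (l_G<s<t<r_G) \] holds if and only if $G(y)=1-\exp\{-c([g(y)]^{-1/(k+1)}-\tau)\}$ for $l_G<y<r_G$, for some constant $c>0$.
   Context: $Y_1,Y_2,\dots$ are i.i.d. copies of $Y$ with distribution function $G$; $l_G=\inf\{y:G(y)>0\}$, $r_G=\sup\{y:G(y)<1\}$. Upper record times $L(1)=1$, $L(m)=\min\{j>L(m-1):Y_j>Y_{L(m-1)}\}$, record values $Y(m)=Y_{L(m)}$. With $R(y)=-\ln(1-G(y))$, conditional expectations given $Y(n-k)=s$, $Y(n+1)=t$ use the conditional density of $Y(n)$: $k[\frac{R(x)-R(s)}{R(t)-R(s)}]^{k-1}\frac{R'(x)}{R(t)-R(s)}$, $s<x<t$. *)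

theory Defs
  imports "HOL-Analysis.Analysis"
begin

definition lG :: "(real \<Rightarrow> real) \<Rightarrow> ereal" where
  "lG G = Inf (ereal ` {y. G y > 0})"

definition rG :: "(real \<Rightarrow> real) \<Rightarrow> ereal" where
  "rG G = Sup (ereal ` {y. G y < 1})"

definition at_lG :: "(real \<Rightarrow> real) \<Rightarrow> real filter" where
  "at_lG G = (if lG G = -\<infinity> then at_bot else at_right (real_of_ereal (lG G)))"

definition at_rG :: "(real \<Rightarrow> real) \<Rightarrow> real filter" where
  "at_rG G = (if rG G = \<infinity> then at_top else at_left (real_of_ereal (rG G)))"

definition Rfun :: "(real \<Rightarrow> real) \<Rightarrow> real \<Rightarrow> real" where
  "Rfun G y = - ln (1 - G y)"

text \<open>Conditional distribution function of Y(n) given Y(n-k)=s, Y(n+1)=t: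
  ((R(x)-R(s))/(R(t)-R(s)))^k for s \<le> x \<le> t (0 below s, 1 above t).\<close>
definition cond_cdf :: "(real \<Rightarrow> real) \<Rightarrow> nat \<Rightarrow> real \<Rightarrow> real \<Rightarrow> real \<Rightarrow> real" where
  "cond_cdf G k s t x =
     ((Rfun G (max s (min x t)) - Rfun G s) / (Rfun G t - Rfun G s)) ^ k"

text \<open>E[h(Y(n)) | Y(n-k)=s, Y(n+1)=t], as the Lebesgue-Stieltjes integral of h
  with respect to the conditional distribution above (on s < x < t).\<close>
definition cond_exp :: "(real \<Rightarrow> real) \<Rightarrow> nat \<Rightarrow> (real \<Rightarrow> real) \<Rightarrow> real \<Rightarrow> real \<Rightarrow> real" where
  "cond_exp G k h s t = (LINT x:{s<..<t}|interval_measure (cond_cdf G k s t). h x)"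

end

theory Submission
  imports Defs "HOL-Probability.Probability"
begin


lemma R_mono_cont:
  fixes G :: "real \<Rightarrow> real"
  assumes G_mono: "mono G" and G_cont: "continuous_on UNIV G" and Gt: "G t < 1"
  shows "\<And>x y. x \<le> y \<Longrightarrow> y \<le> t \<Longrightarrow> Rfun G x \<le> Rfun G y"
    and "\<And>x. x \<le> t \<Longrightarrow> isCont (Rfun G) x"
proof -
  fix x y assume "x \<le> y" "y \<le> t"
  then have "G x \<le> G y" "G y \<le> G t" using G_mono by (auto simp: mono_def)
  then show "Rfun G x \<le> Rfun G y" unfolding Rfun_def using Gt by simp
next
  fix x assume "x \<le> t"
  then have "G x \<le> G t" using G_mono by (auto simp: mono_def)
  then have "1 - G x > 0" using Gt by simp
  moreover have "isCont G x" using G_cont by (simp add: continuous_on_eq_continuous_at)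
  ultimately show "isCont (Rfun G) x" unfolding Rfun_def
    by (auto intro!: continuous_intros)
qed



lemma M1:
  fixes G g h :: "real \<Rightarrow> real" and k :: nat and s t :: real
  assumes k1: "1 \<le> k" and st: "s < t" and G_mono: "mono G" and G_cont: "continuous_on UNIV G"
    and Gt: "G t < 1" and ab: "Rfun G s < Rfun G t"
    and hcont: "continuous_on {Rfun G s..Rfun G t} h"
    and gh: "\<And>x. s < x \<Longrightarrow> x < t \<Longrightarrow> g x = h (Rfun G x)"
  shows "cond_exp G k g s t = integral {Rfun G s..Rfun G t}
           (\<lambda>r. real k * (r - Rfun G s)^(k-1) / (Rfun G t - Rfun G s)^k * h r)"
proof -
  define a where "a = Rfun G s"
  define b where "b = Rfun G t"
  define T where "T = b - a"
  have T: "T > 0" using ab by (simp add: T_def a_def b_def)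
  define \<phi> where "\<phi> x = Rfun G (max s (min x t))" for x
  define F where "F = cond_cdf G k s t"
  have F_eq: "F x = ((\<phi> x - a) / T)^k" for x
    by (simp add: F_def cond_cdf_def \<phi>_def a_def b_def T_def)
  note Rm = R_mono_cont[OF G_mono G_cont Gt]
  have \<phi>_cont: "isCont \<phi> x" for x
    unfolding \<phi>_def
    apply (rule isCont_o2[where f="\<lambda>x. max s (min x t)"]) using st by (auto intro!: continuous_intros Rm(2))
  have \<phi>_mono: "\<phi> x \<le> \<phi> y" if "x \<le> y" for x y
    unfolding \<phi>_def using that st by (intro Rm(1)) auto
  have \<phi>_low: "\<phi> x = a" if "x \<le> s" for x
    using that st by (simp add: \<phi>_def a_def)
  have \<phi>_high: "\<phi> x = b" if "t \<le> x" for x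
    using that st by (simp add: \<phi>_def b_def)
  have \<phi>_range: "a \<le> \<phi> x \<and> \<phi> x \<le> b" for x
    using \<phi>_mono[of "min x s" x] \<phi>_mono[of x "max x t"] \<phi>_low[of "min x s"] \<phi>_high[of "max x t"]
    by auto
  have F_mono: "F x \<le> F y" if "x \<le> y" for x y
    unfolding F_eq using \<phi>_mono[OF that] \<phi>_range[of x] T
    by (intro power_mono divide_right_mono) auto
  have F_isCont: "isCont F x" for x
    unfolding F_eq[abs_def] by (auto intro!: continuous_intros \<phi>_cont simp: T less_imp_neq[OF T, symmetric])
  have F_cont: "continuous_on UNIV F"
    using F_isCont by (simp add: continuous_on_eq_continuous_at)
  have F_low: "F x = 0" if "x \<le> s" for x
    using \<phi>_low[OF that] k1 by (simp add: F_eq)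
  have F_high: "F x = 1" if "t \<le> x" for x
    using \<phi>_high[OF that] T by (simp add: F_eq T_def)
  have F_bot: "(F \<longlongrightarrow> 0) at_bot"
    by (rule tendsto_eventually) (auto simp: eventually_at_bot_linorder intro!: exI[of _ s] F_low)
  have F_top: "(F \<longlongrightarrow> 1) at_top"
    by (rule tendsto_eventually) (auto simp: eventually_at_top_linorder intro!: exI[of _ t] F_high)
  have F_rc: "continuous (at_right x) F" for x
    using F_isCont[of x] by (simp add: continuous_at_imp_continuous_at_within)
  define m where "m = interval_measure F"
  have m_rd: "real_distribution m"
    unfolding m_def using F_mono F_rc F_bot F_top by (rule real_distribution_interval_measure)
  then interpret m: real_distribution m .
  have \<phi>_meas: "\<phi> \<in> borel_measurable borel"
    using \<phi>_cont by (intro borel_measurable_continuous_onI) (simp add: continuous_at_imp_continuous_on)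
  define m' where "m' = distr m borel \<phi>"
  have m'_rd: "real_distribution m'"
    unfolding m'_def by (rule m.real_distribution_distr) (simp add: \<phi>_meas)
  define F' where "F' r = ((max a (min r b) - a) / T)^k" for r
  have cdf_m': "cdf m' r = F' r" for r
  proof -
    have "cdf m' r = measure m (\<phi> -` {..r})"
      unfolding cdf_def m'_def by (subst measure_distr) (auto simp: \<phi>_meas)
    also have "\<dots> = F' r"
    proof (cases "r < a")
      case True
      then have "\<phi> -` {..r} = {}" using \<phi>_range by (metis atMost_iff empty_iff linorder_not_le order_less_le_trans subsetI subset_empty vimage_eq)
      then show ?thesis using True T k1 by (simp add: F'_def)
    next
      case False
      show ?thesis
      proof (cases "b \<le> r")
        case True
        then have "\<phi> -` {..r} = UNIV" using \<phi>_range by (auto intro: order_trans)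
        then show ?thesis using True T False m.prob_space by (simp add: F'_def T_def)
      next
        case False2: False
        define S where "S = {x. \<phi> x \<le> r}"
        have sS: "s \<in> S" using \<phi>_low[of s] False by (simp add: S_def)
        have Slt: "x < t" if "x \<in> S" for x
          using that \<phi>_high[of x] False2 by (force simp: S_def)
        have bddS: "bdd_above S" using Slt by (auto intro!: bdd_aboveI[of _ t] less_imp_le)
        have clS: "closed S" unfolding S_def
          by (intro closed_Collect_le continuous_intros) (simp add: continuous_at_imp_continuous_on \<phi>_cont)
        define x0 where "x0 = Sup S"
        have x0S: "x0 \<in> S" unfolding x0_def using sS bddS clS by (intro closed_contains_Sup) auto
        have x0t: "x0 \<le> t" using Slt[OF x0S] by simp
        obtain y where y: "x0 \<le> y" "y \<le> t" "\<phi> y = r"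
          using IVT'[of \<phi> x0 r t] x0S x0t \<phi>_high[of t] False2 \<phi>_cont
          by (auto simp: S_def continuous_at_imp_continuous_on)
        have "y \<le> x0" unfolding x0_def using y bddS by (intro cSup_upper) (auto simp: S_def)
        then have \<phi>x0: "\<phi> x0 = r" using y by simp
        have "\<phi> -` {..r} = {..x0}"
        proof (rule set_eqI)
          fix x show "x \<in> \<phi> -` {..r} \<longleftrightarrow> x \<in> {..x0}"
          proof
            assume "x \<in> \<phi> -` {..r}"
            then have "x \<in> S" by (simp add: S_def)
            then show "x \<in> {..x0}" unfolding x0_def using bddS by (simp add: cSup_upper)
          next
            assume "x \<in> {..x0}"
            then show "x \<in> \<phi> -` {..r}" using \<phi>_mono[of x x0] \<phi>x0 by simp
          qed
        qed
        then have "measure m (\<phi> -` {..r}) = F x0"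
          unfolding m_def using F_mono F_rc F_bot by (simp add: measure_interval_measure_Iic)
        then show ?thesis using \<phi>x0 False False2 by (simp add: F_eq F'_def)
      qed
    qed
    finally show ?thesis .
  qed
  define f0 where "f0 r = real k * (r - a)^(k-1) / T^k" for r
  define f where "f r = indicator {a..b} r * f0 r" for r
  have f0_nn: "0 \<le> f0 r" if "a \<le> r" for r
    using that T by (simp add: f0_def)
  have ftc: "(f0 has_integral ((y - a)/T)^k) {a..y}" if "a \<le> y" for y
  proof -
    have "(f0 has_integral (((y - a)/T)^k - ((a - a)/T)^k)) {a..y}"
    proof (rule fundamental_theorem_of_calculus[OF that])
      fix x assume "x \<in> {a..y}"
      have "((\<lambda>x. ((x - a)/T)^k) has_real_derivative (real k * ((x - a)/T)^(k-1) * (1/T))) (at x within {a..y})"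
        using T by (auto intro!: derivative_eq_intros)
      moreover have "real k * ((x - a)/T)^(k-1) * (1/T) = f0 x"
      proof -
        have "T^k = T^(k-1) * T" using k1 by (metis Suc_diff_le diff_Suc_1 mult.commute power_Suc)
        then show ?thesis using T by (simp add: f0_def power_divide)
      qed
      ultimately show "((\<lambda>x. ((x - a)/T)^k) has_vector_derivative f0 x) (at x within {a..y})"
        by (simp add: has_real_derivative_iff_has_vector_derivative)
    qed
    then show ?thesis using k1 by (simp add: power_0_left)
  qed
  have f_meas[measurable]: "f \<in> borel_measurable borel"
    unfolding f_def f0_def by measurable
  define D where "D = density lborel (\<lambda>x. ennreal (f x))"
  have emD: "emeasure D {..r} = ennreal (F' r)" for r
  proof (cases "a \<le> r")
    case True
    have "emeasure D {..r} = (\<integral>\<^sup>+ x. ennreal (f x) * indicator {..r} x \<partial>lborel)"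
      unfolding D_def by (subst emeasure_density) auto
    also have "\<dots> = (\<integral>\<^sup>+ x. ennreal (indicator {a..min r b} x * f0 x) \<partial>lborel)"
      by (intro nn_integral_cong) (auto simp: f_def indicator_def)
    also have "\<dots> = ennreal (((min r b - a)/T)^k)"
      using True T ab by (intro nn_integral_has_integral_lebesgue ftc f0_nn) (auto simp: a_def b_def)
    finally show ?thesis using True T ab by (simp add: F'_def a_def b_def)
  next
    case False
    have "emeasure D {..r} = (\<integral>\<^sup>+ x. ennreal (f x) * indicator {..r} x \<partial>lborel)"
      unfolding D_def by (subst emeasure_density) auto
    also have "(\<lambda>x. ennreal (f x) * indicator {..r} x) = (\<lambda>x. 0)"
      using False by (auto simp: fun_eq_iff f_def indicator_def)
    finally show ?thesis using False T k1 by (simp add: F'_def)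
  qed
  have F'_nn: "0 \<le> F' r" for r using T by (simp add: F'_def)
  have emD_UNIV: "emeasure D UNIV = 1"
  proof -
    have "emeasure D UNIV = (\<integral>\<^sup>+ x. ennreal (f x) * indicator UNIV x \<partial>lborel)"
      unfolding D_def by (subst emeasure_density) auto
    also have "\<dots> = (\<integral>\<^sup>+ x. ennreal (indicator {a..b} x * f0 x) \<partial>lborel)"
      by (intro nn_integral_cong) (auto simp: f_def indicator_def)
    also have "\<dots> = ennreal (((b - a)/T)^k)"
      using T ab by (intro nn_integral_has_integral_lebesgue ftc f0_nn) (auto simp: a_def b_def)
    finally show ?thesis using T by (simp add: T_def)
  qed
  have D_rd: "real_distribution D"
  proof -
    interpret prob_space D by (rule prob_spaceI) (simp add: D_def emD_UNIV[unfolded D_def])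
    show ?thesis by unfold_locales (simp add: D_def)
  qed
  have cdfD: "cdf D r = F' r" for r
    unfolding cdf_def measure_def using emD[of r] F'_nn[of r] by simp
  have m'D: "m' = D"
    using m'_rd D_rd by (rule cdf_unique) (simp add: fun_eq_iff cdfD cdf_m')
  define hc where "hc r = h (max a (min r b))" for r
  have hc_cont: "continuous_on UNIV hc"
    unfolding hc_def
    using T unfolding T_def by (intro continuous_on_compose2[OF hcont[folded a_def b_def]]) (auto intro!: continuous_intros)
  have hc_meas[measurable]: "hc \<in> borel_measurable borel"
    using hc_cont by (rule borel_measurable_continuous_onI)
  have hc_eq: "hc r = h r" if "a \<le> r" "r \<le> b" for r
    using that by (simp add: hc_def)
  have \<phi>_in: "\<phi> x = Rfun G x" if "s < x" "x < t" for x
    using that by (simp add: \<phi>_def)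
  have meas_Ioc: "measure m {s<..t} = 1"
    unfolding m_def using st F_mono F_rc by (subst measure_interval_measure_Ioc) (auto simp: F_low F_high)
  have meas_pt: "measure m {t} = 0"
  proof -
    have "emeasure m {t..t} = F t - F t"
      unfolding m_def using F_mono F_cont by (intro emeasure_interval_measure_Icc) auto
    then show ?thesis by (simp add: measure_def)
  qed
  have "{s<..<t} = {s<..t} - {t}" by auto
  then have "m.prob {s<..<t} = 1"
    using meas_Ioc meas_pt st by (simp add: m.finite_measure_Diff' Int_absorb1)
  then have AEst: "AE x in m. x \<in> {s<..<t}" by (rule m.AE_prob_1)
  have [measurable]: "\<phi> \<in> borel_measurable m" unfolding m_def using \<phi>_meas by simp
  have meas1: "(\<lambda>x. indicator {s<..<t} x * hc (\<phi> x)) \<in> borel_measurable m" unfolding m_def by measurable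
  have meas2: "(\<lambda>x. hc (\<phi> x)) \<in> borel_measurable m" by measurable
  have "cond_exp G k g s t = (\<integral>x. indicator {s<..<t} x *\<^sub>R g x \<partial>m)"
    by (simp add: cond_exp_def set_lebesgue_integral_def m_def F_def)
  also have "\<dots> = (\<integral>x. indicator {s<..<t} x * hc (\<phi> x) \<partial>m)"
  proof (rule Bochner_Integration.integral_cong[OF refl])
    fix x
    show "indicator {s<..<t} x *\<^sub>R g x = indicator {s<..<t} x * hc (\<phi> x)"
    proof (cases "s < x \<and> x < t")
      case True
      then show ?thesis using gh[of x] \<phi>_in[of x] hc_eq[of "\<phi> x"] \<phi>_range[of x] by simp
    qed auto
  qed
  also have "\<dots> = (\<integral>x. hc (\<phi> x) \<partial>m)"
    using AEst meas1 meas2 by (intro integral_cong_AE) auto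
  also have "\<dots> = (\<integral>x. hc x \<partial>m')"
    unfolding m'_def by (rule integral_distr[symmetric]) (auto simp: \<phi>_meas)
  also have "\<dots> = (\<integral>x. f x *\<^sub>R hc x \<partial>lborel)"
  proof -
    have f_nn: "0 \<le> f x" for x by (simp add: f_def f0_nn indicator_def)
    have fm: "f \<in> borel_measurable lborel" using f_meas by simp
    have hm: "hc \<in> borel_measurable lborel" using hc_meas by simp
    show ?thesis
      unfolding m'D D_def by (rule integral_density[OF hm fm]) (auto intro!: AE_I2 f_nn)
  qed
  also have "\<dots> = (LINT x:{a..b}|lborel. f0 x * hc x)"
    unfolding set_lebesgue_integral_def by (intro Bochner_Integration.integral_cong) (auto simp: f_def)
  also have "\<dots> = integral {a..b} (\<lambda>x. f0 x * hc x)"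
    by (intro set_borel_integral_eq_integral borel_integrable_atLeastAtMost')
       (use T in \<open>auto simp: f0_def intro!: continuous_intros continuous_on_subset[OF hc_cont]\<close>)
  also have "\<dots> = integral {a..b} (\<lambda>x. f0 x * h x)"
    by (intro integral_cong) (auto simp: hc_eq)
  finally show ?thesis by (simp add: f0_def a_def b_def T_def)
qed



context
  fixes G :: "real \<Rightarrow> real"
  assumes G_mono: "mono G"
    and G_bot: "(G \<longlongrightarrow> 0) at_bot"
    and G_top: "(G \<longlongrightarrow> 1) at_top"
    and G_cont: "continuous_on UNIV G"
begin

lemma G_nonneg: "0 \<le> G y"
proof (rule tendsto_upperbound[OF G_bot])
  show "\<forall>\<^sub>F z in at_bot. G z \<le> G y"
    unfolding eventually_at_bot_linorder using monoD[OF G_mono] by (intro exI[of _ y]) auto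
qed simp

lemma G_le1: "G y \<le> 1"
proof (rule tendsto_lowerbound[OF G_top])
  show "\<forall>\<^sub>F z in at_top. G y \<le> G z"
    unfolding eventually_at_top_linorder using monoD[OF G_mono] by (intro exI[of _ y]) auto
qed simp

lemma lG_less_iff: "lG G < ereal y \<longleftrightarrow> (\<exists>z<y. G z > 0)"
  unfolding lG_def by (auto simp: Inf_less_iff)

lemma less_rG_iff: "ereal y < rG G \<longleftrightarrow> (\<exists>z>y. G z < 1)"
  unfolding rG_def by (auto simp: less_Sup_iff)

lemma G_pos: "lG G < ereal y \<Longrightarrow> G y > 0"
proof -
  assume "lG G < ereal y"
  then obtain z where "z < y" "G z > 0" unfolding lG_less_iff by auto
  moreover have "G z \<le> G y" using \<open>z < y\<close> monoD[OF G_mono, of z y] by simp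
  ultimately show ?thesis by simp
qed

lemma G_lt1: "ereal y < rG G \<Longrightarrow> G y < 1"
proof -
  assume "ereal y < rG G"
  then obtain z where "y < z" "G z < 1" unfolding less_rG_iff by auto
  moreover have "G y \<le> G z" using \<open>y < z\<close> monoD[OF G_mono, of y z] by simp
  ultimately show ?thesis by simp
qed

lemma I_open: "lG G < ereal y \<Longrightarrow> ereal y < rG G \<Longrightarrow>
   \<exists>d>0. \<forall>z. \<bar>z - y\<bar> \<le> d \<longrightarrow> lG G < ereal z \<and> ereal z < rG G"
proof -
  assume "lG G < ereal y" "ereal y < rG G"
  then obtain z1 z2 where z: "z1 < y" "G z1 > 0" "y < z2" "G z2 < 1"
    unfolding lG_less_iff less_rG_iff by auto
  define d where "d = min (y - z1) (z2 - y) / 2"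
  have "d > 0" using z by (simp add: d_def)
  moreover have "lG G < ereal z \<and> ereal z < rG G" if "\<bar>z - y\<bar> \<le> d" for z
  proof -
    have "d \<le> (y - z1)/2" "d \<le> (z2 - y)/2" by (auto simp: d_def)
    then have "z1 < z" "z < z2" using that z by (auto simp: abs_le_iff)
    then show ?thesis unfolding lG_less_iff less_rG_iff using z by auto
  qed
  ultimately show ?thesis by blast
qed

lemma G_val: "0 < c \<Longrightarrow> c < 1 \<Longrightarrow> \<exists>y. G y = c"
proof -
  assume c: "0 < c" "c < 1"
  obtain x1 where x1: "G x1 < c"
    using order_tendstoD(2)[OF G_bot c(1)] by (auto simp: eventually_at_bot_linorder)
  obtain x2 where x2: "G x2 > c"
    using order_tendstoD(1)[OF G_top c(2)] by (auto simp: eventually_at_top_linorder)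
  have "x1 \<le> x2"
  proof (rule ccontr)
    assume "\<not> x1 \<le> x2"
    then have "G x2 \<le> G x1" using monoD[OF G_mono, of x2 x1] by simp
    then show False using x1 x2 by simp
  qed
  then show ?thesis using IVT'[of G x1 c x2] x1 x2 continuous_on_subset[OF G_cont] by force
qed

lemma I_two: "\<exists>p q. p < q \<and> lG G < ereal p \<and> ereal p < rG G \<and> lG G < ereal q \<and> ereal q < rG G"
proof -
  obtain y1 y2 y3 where y: "G y1 = 1/4" "G y2 = 1/2" "G y3 = 3/4"
    using G_val[of "1/4"] G_val[of "1/2"] G_val[of "3/4"] by auto
  have mono_lt: "u < v" if "G u < G v" for u v
  proof (rule ccontr)
    assume "\<not> u < v"
    then have "G v \<le> G u" using monoD[OF G_mono, of v u] by simp
    then show False using that by simp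
  qed
  have "y1 < y2" "y2 < y3" using y mono_lt[of y1 y2] mono_lt[of y2 y3] by auto
  have l: "lG G < ereal x" if "y1 < x" for x
    unfolding lG_less_iff using that y by auto
  have r: "ereal x < rG G" if "x < y3" for x
    unfolding less_rG_iff using that y by auto
  have "(y1+y2)/2 < (y2+y3)/2 \<and> lG G < ereal ((y1+y2)/2) \<and> ereal ((y1+y2)/2) < rG G
       \<and> lG G < ereal ((y2+y3)/2) \<and> ereal ((y2+y3)/2) < rG G"
    using \<open>y1 < y2\<close> \<open>y2 < y3\<close> by (intro conjI l r) auto
  then show ?thesis by blast
qed

lemma lG_not_top: "lG G \<noteq> \<infinity>"
  using I_two by auto

lemma at_lG_ev: "lG G < ereal q \<Longrightarrow> ereal q < rG G \<Longrightarrow>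
   eventually (\<lambda>y. lG G < ereal y \<and> y < q) (at_lG G)"
proof (cases "lG G")
  case (real l)
  assume q: "lG G < ereal q"
  then have "l < q" using real by simp
  then show ?thesis unfolding at_lG_def using real
    by (auto simp: eventually_at_right_field intro!: exI[of _ q])
next
  case MInf
  show ?thesis unfolding at_lG_def using MInf
    by (auto simp: eventually_at_bot_linorder intro!: exI[of _ "q - 1"])
next
  case PInf
  then show ?thesis using lG_not_top by simp
qed

lemma at_lG_nontriv: "\<not> trivial_limit (at_lG G)"
  unfolding at_lG_def by (auto simp: trivial_limit_at_bot_linorder)

lemma G_at_lG: "(G \<longlongrightarrow> 0) (at_lG G)"
proof (cases "lG G")
  case (real l)
  have G0: "G z = 0" if "z < l" for z
  proof -
    have "\<not> lG G < ereal l" using real by simp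
    then have "\<not> G z > 0" using that unfolding lG_less_iff by auto
    then show ?thesis using G_nonneg[of z] by simp
  qed
  have cG: "isCont G l" using G_cont by (simp add: continuous_on_eq_continuous_at)
  have "G l \<le> 0"
  proof (rule tendsto_upperbound)
    show "(G \<longlongrightarrow> G l) (at_left l)" using cG by (simp add: isCont_def filterlim_at_split)
    show "\<forall>\<^sub>F x in at_left l. G x \<le> 0"
      by (auto simp: eventually_at_left_field G0 intro!: exI[of _ "l - 1"])
  qed simp
  then have "G l = 0" using G_nonneg[of l] by simp
  then have "(G \<longlongrightarrow> 0) (at_right l)" using cG by (simp add: isCont_def filterlim_at_split)
  then show ?thesis unfolding at_lG_def using real by simp
next
  case MInf
  then show ?thesis unfolding at_lG_def using G_bot by simp
next
  case PInf
  then show ?thesis using lG_not_top by simp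
qed

lemma R_at_lG: "(Rfun G \<longlongrightarrow> 0) (at_lG G)"
proof -
  have "((\<lambda>y. - ln (1 - G y)) \<longlongrightarrow> - ln (1 - 0)) (at_lG G)"
    by (intro tendsto_intros G_at_lG) simp
  then show ?thesis by (simp add: Rfun_def[abs_def])
qed

end


lemma cond_exp_zero:
  assumes k1: "1 \<le> k" and eq: "Rfun G s = Rfun G t"
  shows "cond_exp G k g s t = 0"
proof -
  have F0: "cond_cdf G k s t = (\<lambda>x. 0)"
    using k1 eq by (auto simp: cond_cdf_def fun_eq_iff)
  have "emeasure (interval_measure (\<lambda>x::real. 0::real)) UNIV = ennreal 0"
    by (rule interval_measure_UNIV) auto
  then have "AE x in interval_measure (\<lambda>x. 0). indicator {s<..<t} x *\<^sub>R g x = 0"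
    by (intro emeasure_0_AE) simp
  then show ?thesis unfolding cond_exp_def F0 set_lebesgue_integral_def
    by (rule integral_eq_zero_AE)
qed

context
  fixes G g :: "real \<Rightarrow> real" and k :: nat
  assumes k1: "1 \<le> k"
    and G_mono: "mono G"
    and G_bot: "(G \<longlongrightarrow> 0) at_bot"
    and G_top: "(G \<longlongrightarrow> 1) at_top"
    and G_cont: "continuous_on UNIV G"
    and g_pos: "\<And>y. lG G < ereal y \<Longrightarrow> ereal y < rG G \<Longrightarrow> g y > 0"
    and g_cont: "continuous_on {y. lG G < ereal y \<and> ereal y < rG G} g"
    and g_decr: "strict_antimono_on {y. lG G < ereal y \<and> ereal y < rG G} g"
    and ident: "\<And>s t. lG G < ereal s \<Longrightarrow> s < t \<Longrightarrow> ereal t < rG G \<Longrightarrow>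
            cond_exp G k g s t = g t powr (real k / (real k + 1)) * g s powr (1 / (real k + 1))"
begin

abbreviation "I \<equiv> {y. lG G < ereal y \<and> ereal y < rG G}"

lemma inI_between: "x \<in> I \<Longrightarrow> y \<in> I \<Longrightarrow> x \<le> z \<Longrightarrow> z \<le> y \<Longrightarrow> z \<in> I"
proof -
  assume a: "x \<in> I" "y \<in> I" "x \<le> z" "z \<le> y"
  have "ereal x \<le> ereal z" "ereal z \<le> ereal y" using a by auto
  have 1: "lG G < ereal z" using order.strict_trans2[OF _ \<open>ereal x \<le> ereal z\<close>] a by simp
  have 2: "ereal z < rG G" using order.strict_trans1[OF \<open>ereal z \<le> ereal y\<close>] a by simp
  show ?thesis using 1 2 by simp
qed

lemma R_isCont: "x \<in> I \<Longrightarrow> isCont (Rfun G) x"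
  using R_mono_cont(2)[OF G_mono G_cont G_lt1[OF G_mono G_bot G_top G_cont, of x]] by simp

lemma R_strict: "s \<in> I \<Longrightarrow> t \<in> I \<Longrightarrow> s < t \<Longrightarrow> Rfun G s < Rfun G t"
proof -
  assume st: "s \<in> I" "t \<in> I" "s < t"
  have le: "Rfun G s \<le> Rfun G t"
    using R_mono_cont(1)[OF G_mono G_cont G_lt1[OF G_mono G_bot G_top G_cont, of t]] st by simp
  show ?thesis
  proof (rule ccontr)
    assume "\<not> ?thesis"
    then have "Rfun G s = Rfun G t" using le by simp
    then have "cond_exp G k g s t = 0" by (rule cond_exp_zero[OF k1])
    moreover have "g t powr (real k / (real k + 1)) * g s powr (1 / (real k + 1)) > 0"
      using g_pos[of s] g_pos[of t] st by simp
    moreover have "cond_exp G k g s t = g t powr (real k / (real k + 1)) * g s powr (1 / (real k + 1))"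
      using ident[of s t] st by simp
    ultimately show False by linarith
  qed
qed

lemma g_isCont: "x \<in> I \<Longrightarrow> isCont g x"
proof -
  assume x: "x \<in> I"
  obtain d where d: "d > 0" "\<And>z. \<bar>z - x\<bar> \<le> d \<Longrightarrow> z \<in> I"
    using I_open[OF G_mono G_bot G_top G_cont] x by force
  have "ball x d \<subseteq> I" using d by (auto simp: dist_real_def abs_minus_commute intro: less_imp_le)
  then have "x \<in> interior I" using d(1) by (auto simp: mem_interior)
  then show ?thesis using g_cont by (simp add: continuous_on_interior)
qed

lemma main_deriv:
  assumes t: "t \<in> I"
  shows "\<exists>D. \<forall>s. s \<in> I \<and> s < t \<longrightarrow> real k * g t = g s powr (1 / (real k + 1)) *
            (real k * g t powr (real k / (real k + 1)) + (Rfun G t - Rfun G s) * D)"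
proof -
  define R where "R = Rfun G"
  have Rs: "R x < R y" if "x \<in> I" "y \<in> I" "x < y" for x y
    using R_strict that by (simp add: R_def)
  have inj: "inj_on R I"
  proof (rule inj_onI)
    fix x y assume "x \<in> I" "y \<in> I" "R x = R y"
    then show "x = y" using Rs[of x y] Rs[of y x] by (cases x y rule: linorder_cases) auto
  qed
  define Ri where "Ri = inv_into I R"
  have RiR: "Ri (R x) = x" if "x \<in> I" for x using that inj by (simp add: Ri_def)
  define h where "h r = g (Ri r)" for r
  define \<phi> where "\<phi> x = g x powr (1 / (real k + 1))" for x
  define \<psi> where "\<psi> x = g x powr (real k / (real k + 1))" for x
  have \<phi>pos: "\<phi> x > 0" if "x \<in> I" for x using g_pos[of x] that by (simp add: \<phi>_def)
  have Rc: "isCont R x" if "x \<in> I" for x using R_isCont that by (simp add: R_def)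
  have hc_pt: "isCont h (R x)" if x: "x \<in> I" for x
  proof -
    obtain d where d: "d > 0" "\<And>z. \<bar>z - x\<bar> \<le> d \<Longrightarrow> z \<in> I"
      using I_open[OF G_mono G_bot G_top G_cont] x by force
    have "isCont Ri (R x)"
      by (rule isCont_inverse_function[where f=R and g=Ri and x=x and d=d, OF d(1)]) (auto intro!: RiR Rc d(2))
    moreover have "isCont g (Ri (R x))" using g_isCont x by (simp add: RiR)
    ultimately show ?thesis unfolding h_def by (rule isCont_o2)
  qed
  have hcont: "continuous_on {R x..R y} h" if xy: "x \<in> I" "y \<in> I" "x \<le> y" for x y
  proof (rule continuous_at_imp_continuous_on, rule ballI)
    fix r assume r: "r \<in> {R x..R y}"
    have "continuous_on {x..y} R"
    proof (intro continuous_at_imp_continuous_on ballI Rc)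
      fix z assume "z \<in> {x..y}" then show "z \<in> I" using inI_between[of x y z] xy by auto
    qed
    then obtain z where z: "x \<le> z" "z \<le> y" "R z = r"
      using IVT'[of R x r y] r xy by auto
    have "z \<in> I" using z xy inI_between by blast
    then show "isCont h r" using hc_pt z by blast
  qed
  have ident_r: "integral {R s..R x} (\<lambda>r. real k * (r - R s)^(k-1) / (R x - R s)^k * h r) = \<psi> x * \<phi> s"
    if "s \<in> I" "x \<in> I" "s < x" for s x
  proof -
    have gh: "g y = h (Rfun G y)" if "s < y" "y < x" for y
    proof -
      have "y \<in> I" using inI_between[of s x y] that \<open>s \<in> I\<close> \<open>x \<in> I\<close> by simp
      then show ?thesis using RiR[of y] by (simp add: h_def R_def)
    qed
    have "cond_exp G k g s x = integral {R s..R x} (\<lambda>r. real k * (r - R s)^(k-1) / (R x - R s)^k * h r)"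
      unfolding R_def
      by (rule M1[OF k1 \<open>s < x\<close> G_mono G_cont G_lt1[OF G_mono G_bot G_top G_cont]])
         (use that Rs hcont gh in \<open>auto simp: R_def\<close>)
    then show ?thesis using ident[of s x] that by (simp add: \<phi>_def \<psi>_def)
  qed
  define P where "P s u = integral {R s..u} (\<lambda>r. real k * (r - R s)^(k-1) * h r)" for s u
  have Pid: "P s (R x) = (R x - R s)^k * (\<psi> x * \<phi> s)" if "s \<in> I" "x \<in> I" "s < x" for s x
  proof -
    have T: "R x - R s > 0" using Rs that by simp
    have "integral {R s..R x} (\<lambda>r. real k * (r - R s)^(k-1) / (R x - R s)^k * h r)
        = integral {R s..R x} (\<lambda>r. (1 / (R x - R s)^k) *\<^sub>R (real k * (r - R s)^(k-1) * h r))"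
      by (intro integral_cong) simp
    also have "\<dots> = (1 / (R x - R s)^k) * P s (R x)" by (simp add: P_def)
    finally show ?thesis using ident_r[OF that] T by (simp add: field_simps)
  qed
  obtain d where d: "d > 0" "\<And>z. \<bar>z - t\<bar> \<le> d \<Longrightarrow> z \<in> I"
    using I_open[OF G_mono G_bot G_top G_cont] t by force
  define t1 where "t1 = t - d/2"
  define t2 where "t2 = t + d"
  define s0 where "s0 = t - d"
  have t1I: "t1 \<in> I" and t2I: "t2 \<in> I" and s0I: "s0 \<in> I"
    using d by (auto simp: t1_def t2_def s0_def intro!: d(2))
  have tt: "s0 < t1" "t1 < t" "t < t2" using d(1) by (auto simp: t1_def t2_def s0_def)
  define b where "b = R t"
  define W where "W s = {R (max s t1)<..<R t2}" for s
  define \<Psi> where "\<Psi> u = \<psi> (Ri u)" for u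
  have surj: "\<exists>x. max s t1 < x \<and> x < t2 \<and> R x = u" if s: "s \<in> I" "s < t" and u: "u \<in> W s" for s u
  proof -
    have mI: "max s t1 \<in> I" using s t1I by (simp add: max_def)
    have "continuous_on {max s t1..t2} R"
    proof (intro continuous_at_imp_continuous_on ballI Rc)
      fix z assume "z \<in> {max s t1..t2}" then show "z \<in> I" using inI_between[of "max s t1" t2 z] mI t2I by auto
    qed
    moreover have "max s t1 \<le> t2" using s tt by simp
    ultimately obtain x where x: "max s t1 \<le> x" "x \<le> t2" "R x = u"
      using IVT'[of R "max s t1" u t2] u by (auto simp: W_def)
    then show ?thesis using u by (intro exI[of _ x]) (auto simp: W_def order.order_iff_strict)
  qed
  have xI: "x \<in> I" if "max s t1 < x" "x < t2" for s x
    using inI_between[of t1 t2 x] t1I t2I that by simp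
  have FTC: "(P s has_real_derivative (real k * (b - R s)^(k-1) * h b)) (at b)" if s: "s \<in> I" "s < t" for s
  proof -
    have bin: "R s < b" "b < R t2" using Rs s t t2I tt by (auto simp: b_def)
    have "(P s has_real_derivative (real k * (b - R s)^(k-1) * h b)) (at b within {R s..R t2})"
      unfolding P_def
      by (rule integral_has_real_derivative)
         (use bin hcont[of s t2] s t2I tt in \<open>auto intro!: continuous_intros\<close>)
    then show ?thesis using bin by (simp add: at_within_Icc_at)
  qed
  have Pprod: "P s u = (u - R s)^k * (\<Psi> u * \<phi> s)" if s: "s \<in> I" "s < t" and u: "u \<in> W s" for s u
  proof -
    obtain x where x: "max s t1 < x" "x < t2" "R x = u" using surj[OF s u] by blast
    have "x \<in> I" using xI x by blast
    moreover have "Ri u = x" using RiR[OF \<open>x \<in> I\<close>] x(3) by simp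
    ultimately show ?thesis using Pid[of s x] s x by (simp add: \<Psi>_def)
  qed
  have openW: "open (W s)" for s by (simp add: W_def)
  have bW: "b \<in> W s" if s: "s \<in> I" "s < t" for s
    using Rs[of "max s t1" t] Rs[of t t2] s t t1I t2I tt by (auto simp: W_def b_def max_def)
  obtain D where dPsi: "(\<Psi> has_real_derivative D) (at b)"
  proof -
    have s0t: "s0 \<in> I" "s0 < t" using s0I tt by auto
    have den: "((\<lambda>u. (u - R s0)^k * \<phi> s0) has_real_derivative (real k * (b - R s0)^(k-1) * \<phi> s0)) (at b)"
      by (auto intro!: derivative_eq_intros)
    have nz: "(b - R s0)^k * \<phi> s0 \<noteq> 0"
      using Rs[of s0 t] s0t t \<phi>pos[OF s0I] by (simp add: b_def)
    from DERIV_divide[OF FTC[OF s0t] den nz]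
    have "\<exists>E. ((\<lambda>u. P s0 u / ((u - R s0)^k * \<phi> s0)) has_real_derivative E) (at b)" by blast
    then obtain E where E: "((\<lambda>u. P s0 u / ((u - R s0)^k * \<phi> s0)) has_real_derivative E) (at b)" by blast
    have "(\<Psi> has_real_derivative E) (at b)"
    proof (rule has_field_derivative_transform_within_open[OF E openW bW[OF s0t]])
      fix u assume u: "u \<in> W s0"
      have "max s0 t1 = t1" using tt by simp
      moreover have "R s0 < R t1" using Rs[of s0 t1] s0I t1I tt by simp
      ultimately have "u - R s0 > 0" using u by (simp add: W_def)
      then show "P s0 u / ((u - R s0)^k * \<phi> s0) = \<Psi> u"
        using Pprod[OF s0t u] \<phi>pos[OF s0I] by simp
    qed
    then show ?thesis using that by blast
  qed
  have "real k * g t = \<phi> s * (real k * \<psi> t + (R t - R s) * D)" if s: "s \<in> I" "s < t" for s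
  proof -
    have prod: "((\<lambda>u. (u - R s)^k * (\<Psi> u * \<phi> s)) has_real_derivative
        (real k * (b - R s)^(k-1) * (\<Psi> b * \<phi> s) + (b - R s)^k * (D * \<phi> s))) (at b)"
      by (auto intro!: derivative_eq_intros dPsi)
    have "(P s has_real_derivative
        (real k * (b - R s)^(k-1) * (\<Psi> b * \<phi> s) + (b - R s)^k * (D * \<phi> s))) (at b)"
      by (rule has_field_derivative_transform_within_open[OF prod openW bW[OF s]]) (simp add: Pprod[OF s])
    from DERIV_unique[OF FTC[OF s] this]
    have eq: "real k * (b - R s)^(k-1) * h b = real k * (b - R s)^(k-1) * (\<Psi> b * \<phi> s) + (b - R s)^k * (D * \<phi> s)" .
    have e: "b - R s > 0" using Rs[of s t] s t by (simp add: b_def)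
    have ek: "(b - R s)^k = (b - R s)^(k-1) * (b - R s)"
      using k1 by (metis Suc_diff_le diff_Suc_1 mult.commute power_Suc)
    have hb: "h b = g t" "\<Psi> b = \<psi> t" using RiR[OF t] by (simp_all add: h_def \<Psi>_def b_def)
    have "(b - R s)^(k-1) * (real k * g t) = (b - R s)^(k-1) * (\<phi> s * (real k * \<psi> t + (R t - R s) * D))"
      using eq unfolding ek hb by (simp add: algebra_simps b_def)
    then show ?thesis using e by simp
  qed
  then show ?thesis unfolding \<phi>_def \<psi>_def R_def by blast
qed

lemma forward:
  "\<exists>c>0. \<forall>y. lG G < ereal y \<and> ereal y < rG G \<longrightarrow>
            G y = 1 - exp (- c * (g y powr (- 1 / (real k + 1))
                   - Lim (at_lG G) (\<lambda>z. g z powr (- 1 / (real k + 1)))))"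
proof -
  define H where "H y = g y powr (- 1 / (real k + 1))" for y
  define R where "R = Rfun G"
  have aff: "\<exists>\<alpha> \<beta>. \<forall>s. s \<in> I \<and> s < t \<longrightarrow> H s = \<alpha> + \<beta> * R s" if t: "t \<in> I" for t
  proof -
    obtain D where D: "\<And>s. s \<in> I \<Longrightarrow> s < t \<Longrightarrow> real k * g t = g s powr (1 / (real k + 1)) *
            (real k * g t powr (real k / (real k + 1)) + (Rfun G t - Rfun G s) * D)"
      using main_deriv[OF t] by blast
    have gt: "g t > 0" using g_pos t by simp
    have "H s = (real k * g t powr (real k / (real k + 1)) + R t * D) / (real k * g t)
               + (- D / (real k * g t)) * R s" if s: "s \<in> I" "s < t" for s
    proof -
      have gs: "g s > 0" using g_pos s by simp
      have inv: "H s * g s powr (1 / (real k + 1)) = 1"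
        using gs by (simp add: H_def powr_add[symmetric])
      have "H s * (real k * g t) = H s * g s powr (1 / (real k + 1)) *
            (real k * g t powr (real k / (real k + 1)) + (R t - R s) * D)"
        using D[OF s] by (simp add: R_def)
      then have "H s * (real k * g t) = real k * g t powr (real k / (real k + 1)) + (R t - R s) * D"
        using inv by simp
      then have E2: "H s * (real k * g t) = (real k * g t powr (real k / (real k + 1)) + R t * D) + (- D) * R s"
        by (simp add: algebra_simps)
      have nz: "real k * g t \<noteq> 0" using gt k1 by simp
      have "H s = ((real k * g t powr (real k / (real k + 1)) + R t * D) + (- D) * R s) / (real k * g t)"
        using E2 nz by (simp add: eq_divide_eq)
      also have "\<dots> = (real k * g t powr (real k / (real k + 1)) + R t * D) / (real k * g t) + (- D) * R s / (real k * g t)"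
        by (rule add_divide_distrib)
      also have "(- D) * R s / (real k * g t) = (- D / (real k * g t)) * R s" by simp
      finally show ?thesis .
    qed
    then show ?thesis by blast
  qed
  obtain p q where pq: "p < q" "p \<in> I" "q \<in> I"
    using I_two[OF G_mono G_bot G_top G_cont] by auto
  have Rs: "R x < R y" if "x \<in> I" "y \<in> I" "x < y" for x y
    using R_strict that by (simp add: R_def)
  define \<sigma> where "\<sigma> = (H q - H p) / (R q - R p)"
  have Hpq: "H p < H q"
  proof -
    have "g q < g p" using monotone_onD[OF g_decr] pq by auto
    moreover have "g q > 0" using g_pos pq by simp
    ultimately show ?thesis unfolding H_def by (intro powr_less_mono2_neg) auto
  qed
  have \<sigma>pos: "\<sigma> > 0" using Hpq Rs[OF pq(2,3,1)] by (simp add: \<sigma>_def)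
  define \<tau> where "\<tau> = H p - \<sigma> * R p"
  have Hy: "H y = \<tau> + \<sigma> * R y" if y: "y \<in> I" for y
  proof -
    define m where "m = max y q"
    have mI: "m \<in> I" using y pq by (simp add: max_def m_def)
    then have "\<exists>d>0. \<forall>z. \<bar>z - m\<bar> \<le> d \<longrightarrow> lG G < ereal z \<and> ereal z < rG G"
      by (intro I_open[OF G_mono G_bot G_top G_cont]) auto
    then obtain d where d: "d > 0" "\<And>z. \<bar>z - m\<bar> \<le> d \<Longrightarrow> z \<in> I" by auto
    define t where "t = m + d"
    have t: "t \<in> I" using d by (simp add: t_def)
    obtain \<alpha> \<beta> where ab: "\<And>s. s \<in> I \<Longrightarrow> s < t \<Longrightarrow> H s = \<alpha> + \<beta> * R s"
      using aff[OF t] by blast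
    have "y < t" "p < t" "q < t" using d pq by (auto simp: t_def m_def)
    then have e: "H y = \<alpha> + \<beta> * R y" "H p = \<alpha> + \<beta> * R p" "H q = \<alpha> + \<beta> * R q"
      using ab[of y] ab[of p] ab[of q] y pq by simp_all
    have "R q - R p \<noteq> 0" using Rs[OF pq(2,3,1)] by simp
    then have "\<sigma> = \<beta>" unfolding \<sigma>_def using e by (simp add: field_simps)
    then show ?thesis using e by (simp add: \<tau>_def algebra_simps)
  qed
  have Lim: "Lim (at_lG G) H = \<tau>"
  proof (rule tendsto_Lim[OF at_lG_nontriv[OF G_mono G_bot G_top G_cont]])
    have lim1: "((\<lambda>y. \<tau> + \<sigma> * R y) \<longlongrightarrow> \<tau> + \<sigma> * 0) (at_lG G)"
      unfolding R_def by (intro tendsto_intros R_at_lG[OF G_mono G_bot G_top G_cont])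
    have ev: "eventually (\<lambda>y. lG G < ereal y \<and> y < q) (at_lG G)"
      using at_lG_ev[OF G_mono G_bot G_top G_cont, of q] pq by simp
    have ev2: "eventually (\<lambda>y. \<tau> + \<sigma> * R y = H y) (at_lG G)"
      using ev
    proof (rule eventually_mono)
      fix y assume y: "lG G < ereal y \<and> y < q"
      have "ereal y < rG G" using y pq by (metis (mono_tags) ereal_less(2) less_ereal.simps(1) mem_Collect_eq order.strict_trans)
      then have "y \<in> I" using y by simp
      then show "\<tau> + \<sigma> * R y = H y" using Hy by simp
    qed
    show "(H \<longlongrightarrow> \<tau>) (at_lG G)" using tendsto_cong[OF ev2] lim1 by simp
  qed
  show ?thesis
  proof (intro exI[of _ "1 / \<sigma>"] conjI allI impI)
    show "1 / \<sigma> > 0" using \<sigma>pos by simp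
    fix y assume y: "lG G < ereal y \<and> ereal y < rG G"
    have G1: "G y < 1" using G_lt1[OF G_mono G_bot G_top G_cont] y by simp
    have "1 / \<sigma> * (H y - \<tau>) = R y" using Hy[of y] y \<sigma>pos by simp
    then have "exp (- (1 / \<sigma>) * (H y - \<tau>)) = 1 - G y"
      using G1 by (simp add: R_def Rfun_def)
    then show "G y = 1 - exp (- (1 / \<sigma>) * (g y powr (- 1 / (real k + 1))
                   - Lim (at_lG G) (\<lambda>z. g z powr (- 1 / (real k + 1)))))"
      using Lim by (simp add: H_def[abs_def])
  qed
qed

end

lemma alg1:
  fixes A v c u :: real
  assumes "A > 0" "v > 0"
  shows "c^(Suc j) / A * (real (Suc j) * (c * A / v^2 * (u / v)^j)) = real (Suc j) * u^j * (c / v)^(Suc j + 1)"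
proof -
  have "c^(Suc j) / A * (real (Suc j) * (c * A / v^2 * (u / v)^j)) = real (Suc j) * (c^(Suc j) * c) * u^j / (v^2 * v^j)"
    using assms by (simp add: power_divide)
  also have "\<dots> = real (Suc j) * u^j * (c / v)^(Suc j + 1)"
    by (simp add: power_divide power2_eq_square mult_ac)
  finally show ?thesis .
qed
lemma vpos: fixes a r c A tau :: real shows "a \<le> r \<Longrightarrow> a + c * tau = c * A \<Longrightarrow> c > 0 \<Longrightarrow> A > 0 \<Longrightarrow> r + c * tau > 0"
proof -
  assume "a \<le> r" "a + c * tau = c * A" "c > 0" "A > 0"
  then have "c * A > 0" by simp
  then show ?thesis using \<open>a \<le> r\<close> \<open>a + c * tau = c * A\<close> by linarith
qed
lemma alg2:
  fixes d w c A :: real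
  assumes "d \<noteq> 0" "w \<noteq> 0" "c \<noteq> 0" "A \<noteq> 0"
  shows "(1 / d^k) * (c^k / A * (d / w)^k) = 1 / (A * (w / c)^k)"
  using assms by (simp add: power_divide)


lemma backward_integral:
  fixes a b c A \<tau> :: real and k :: nat
  assumes ab: "a < b" and c: "c > 0" and A: "A > 0" and aA: "a + c * \<tau> = c * A" and k1: "1 \<le> k"
  shows "integral {a..b} (\<lambda>r. real k * (r - a)^(k-1) / (b - a)^k * (c / (r + c * \<tau>))^(k+1))
         = 1 / (A * ((b + c * \<tau>) / c)^k)"
proof -
  obtain j where j: "k = Suc j" using k1 by (cases k) auto
  define \<Phi> where "\<Phi> r = c^k / A * ((r - a) / (r + c * \<tau>))^k" for r
  have vpos: "r + c * \<tau> > 0" if "a \<le> r" for r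
    using vpos[OF that aA c A] .
  have deriv: "(\<Phi> has_real_derivative (real k * (r - a)^(k-1) * (c / (r + c * \<tau>))^(k+1))) (at r)"
    if r: "a \<le> r" for r
  proof -
    have v: "r + c * \<tau> > 0" using vpos[OF r] .
    have D1: "((\<lambda>r. (r - a) / (r + c * \<tau>)) has_real_derivative (c * A) / (r + c * \<tau>)^2) (at r)"
    proof -
      have d1: "((\<lambda>x. x - a) has_real_derivative 1) (at r)" by (rule derivative_eq_intros refl)+ simp
      have d2: "((\<lambda>x. x + c * \<tau>) has_real_derivative 1) (at r)" by (rule derivative_eq_intros refl)+ simp
      have "((\<lambda>r. (r - a) / (r + c * \<tau>)) has_real_derivative
          (1 * (r + c * \<tau>) - (r - a) * 1) / ((r + c * \<tau>) * (r + c * \<tau>))) (at r)"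
        using DERIV_divide[OF d1 d2] v by simp
      moreover have "1 * (r + c * \<tau>) - (r - a) * 1 = c * A" using aA by simp
      ultimately show ?thesis by (simp add: power2_eq_square)
    qed
    have D2: "(\<Phi> has_real_derivative c^k / A * (real k * ((c * A) / (r + c * \<tau>)^2 * ((r - a) / (r + c * \<tau>))^(k - Suc 0)))) (at r)"
      unfolding \<Phi>_def by (intro DERIV_cmult DERIV_power D1)
    have "c^k / A * (real k * ((c * A) / (r + c * \<tau>)^2 * ((r - a) / (r + c * \<tau>))^(k - Suc 0)))
          = real k * (r - a)^(k-1) * (c / (r + c * \<tau>))^(k+1)"
      using alg1[OF A v, of c j "r - a"] unfolding j by simp
    then show ?thesis using D2 by simp
  qed
  have "((\<lambda>r. real k * (r - a)^(k-1) * (c / (r + c * \<tau>))^(k+1)) has_integral (\<Phi> b - \<Phi> a)) {a..b}"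
  proof (rule fundamental_theorem_of_calculus)
    show "a \<le> b" using ab by simp
    fix x assume x: "x \<in> {a..b}"
    then have ax: "a \<le> x" by simp
    have "(\<Phi> has_real_derivative (real k * (x - a)^(k-1) * (c / (x + c * \<tau>))^(k+1))) (at x within {a..b})"
      by (rule has_field_derivative_at_within[OF deriv[OF ax]])
    then show "(\<Phi> has_vector_derivative (real k * (x - a)^(k-1) * (c / (x + c * \<tau>))^(k+1))) (at x within {a..b})"
      by (simp add: has_real_derivative_iff_has_vector_derivative)
  qed
  then have "((\<lambda>r. (1 / (b - a)^k) * (real k * (r - a)^(k-1) * (c / (r + c * \<tau>))^(k+1))) has_integral
       ((1 / (b - a)^k) * (\<Phi> b - \<Phi> a))) {a..b}"
    by (rule has_integral_mult_right)
  then have "integral {a..b} (\<lambda>r. real k * (r - a)^(k-1) / (b - a)^k * (c / (r + c * \<tau>))^(k+1))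
       = (1 / (b - a)^k) * (\<Phi> b - \<Phi> a)"
    by (simp add: integral_unique)
  also have "\<dots> = (1 / (b - a)^k) * (c^k / A * ((b - a) / (b + c * \<tau>))^k)"
    using k1 by (simp add: \<Phi>_def power_0_left)
  also have "\<dots> = 1 / (A * ((b + c * \<tau>) / c)^k)"
    using ab vpos[of b] c A by (intro alg2) auto
  finally show ?thesis .
qed

lemma powr_facts:
  fixes x :: real and k :: nat
  assumes x: "x > 0"
  shows "x powr (1 / (real k + 1)) = 1 / x powr (- 1 / (real k + 1))"
    and "(x powr (1 / (real k + 1)))^(k+1) = x"
    and "x powr (real k / (real k + 1)) = (x powr (1 / (real k + 1)))^k"
proof -
  have "- 1 / (real k + 1) = - (1 / (real k + 1))" by simp
  then show "x powr (1 / (real k + 1)) = 1 / x powr (- 1 / (real k + 1))"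
    using x by (simp add: powr_minus divide_inverse)
  have "(x powr (1 / (real k + 1)))^(k+1) = (x powr (1 / (real k + 1))) powr (real (k+1))"
    by (rule powr_realpow[symmetric]) (use x in simp)
  also have "\<dots> = x powr ((real k + 1) / (real k + 1))" using x by (simp add: powr_powr add.commute)
  also have "\<dots> = x" using x by simp
  finally show "(x powr (1 / (real k + 1)))^(k+1) = x" .
  have "(x powr (1 / (real k + 1)))^k = (x powr (1 / (real k + 1))) powr (real k)"
    by (rule powr_realpow[symmetric]) (use x in simp)
  also have "\<dots> = x powr (real k / (real k + 1))" using x by (simp add: powr_powr)
  finally show "x powr (real k / (real k + 1)) = (x powr (1 / (real k + 1)))^k" ..
qed

lemma backward:
  fixes G g :: "real \<Rightarrow> real" and k :: nat and c \<tau> s t :: real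
  assumes k1: "1 \<le> k"
    and G_mono: "mono G"
    and G_bot: "(G \<longlongrightarrow> 0) at_bot"
    and G_top: "(G \<longlongrightarrow> 1) at_top"
    and G_cont: "continuous_on UNIV G"
    and g_pos: "\<And>y. lG G < ereal y \<Longrightarrow> ereal y < rG G \<Longrightarrow> g y > 0"
    and g_decr: "strict_antimono_on {y. lG G < ereal y \<and> ereal y < rG G} g"
    and c: "c > 0"
    and form: "\<And>y. lG G < ereal y \<and> ereal y < rG G \<Longrightarrow>
            G y = 1 - exp (- c * (g y powr (- 1 / (real k + 1)) - \<tau>))"
    and st: "lG G < ereal s" "s < t" "ereal t < rG G"
  shows "cond_exp G k g s t = g t powr (real k / (real k + 1)) * g s powr (1 / (real k + 1))"
proof -
  define I where "I = {y. lG G < ereal y \<and> ereal y < rG G}"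
  define H where "H y = g y powr (- 1 / (real k + 1))" for y
  have sI: "s \<in> I" using st order.strict_trans[of "ereal s" "ereal t" "rG G"] by (simp add: I_def)
  have tI: "t \<in> I" using st order.strict_trans[of "lG G" "ereal s" "ereal t"] by (simp add: I_def)
  have betw: "x \<in> I" if "s \<le> x" "x \<le> t" for x
  proof -
    have "ereal s \<le> ereal x" "ereal x \<le> ereal t" using that by auto
    then show ?thesis using st unfolding I_def
      using order.strict_trans2[of "lG G" "ereal s" "ereal x"] order.strict_trans1[of "ereal x" "ereal t" "rG G"] by simp
  qed
  have gpos: "g y > 0" if "y \<in> I" for y using g_pos that by (simp add: I_def)
  have Hpos: "H y > 0" if "y \<in> I" for y using gpos[OF that] by (simp add: H_def)
  have RH: "Rfun G y = c * (H y - \<tau>)" if "y \<in> I" for y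
    using form[of y] that by (simp add: Rfun_def H_def I_def)
  have gH: "g y = (1 / H y)^(k+1)" if "y \<in> I" for y
    using powr_facts[OF gpos[OF that], of k] by (simp add: H_def)
  have Hst: "H s < H t"
  proof -
    have "g t < g s" using monotone_onD[OF g_decr] sI tI st by (auto simp: I_def)
    then show ?thesis unfolding H_def using gpos[OF tI] by (intro powr_less_mono2_neg) auto
  qed
  define a where "a = Rfun G s"
  define b where "b = Rfun G t"
  have ab: "a < b" using RH[OF sI] RH[OF tI] Hst c by (simp add: a_def b_def)
  have acA: "a + c * \<tau> = c * H s" using RH[OF sI] by (simp add: a_def algebra_simps)
  have bcB: "(b + c * \<tau>) / c = H t" using RH[OF tI] c by (simp add: b_def field_simps)
  define h where "h r = (c / (r + c * \<tau>))^(k+1)" for r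
  have hcont: "continuous_on {a..b} h"
  proof -
    have "r + c * \<tau> > 0" if "r \<in> {a..b}" for r
      using that acA Hpos[OF sI] c by (smt (verit) atLeastAtMost_iff mult_pos_pos)
    then have "r + c * \<tau> \<noteq> 0" if "r \<in> {a..b}" for r using that by force
    then show ?thesis unfolding h_def by (intro continuous_intros) auto
  qed
  have gh: "g x = h (Rfun G x)" if "s < x" "x < t" for x
  proof -
    have xI: "x \<in> I" using betw that by simp
    have "Rfun G x + c * \<tau> = c * H x" using RH[OF xI] by (simp add: algebra_simps)
    then show ?thesis using gH[OF xI] c by (simp add: h_def)
  qed
  have Gt: "G t < 1" using G_lt1[OF G_mono G_bot G_top G_cont] st by simp
  have "cond_exp G k g s t = integral {a..b} (\<lambda>r. real k * (r - a)^(k-1) / (b - a)^k * h r)"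
    unfolding a_def b_def
    by (rule M1[OF k1 st(2) G_mono G_cont Gt]) (use ab hcont gh in \<open>simp_all add: a_def b_def\<close>)
  also have "\<dots> = 1 / (H s * ((b + c * \<tau>) / c)^k)"
    unfolding h_def by (rule backward_integral[OF ab c Hpos[OF sI] acA k1])
  also have "\<dots> = (1 / H t)^k * (1 / H s)"
    using bcB by (simp add: power_divide)
  also have "\<dots> = g t powr (real k / (real k + 1)) * g s powr (1 / (real k + 1))"
    using powr_facts[OF gpos[OF tI], of k] powr_facts[OF gpos[OF sI], of k] by (simp add: H_def)
  finally show ?thesis .
qed


theorem corollary2:
  fixes G g :: "real \<Rightarrow> real" and n k :: nat
  assumes n2: "n \<ge> 2" and k1: "1 \<le> k" and kn: "k \<le> n - 1"
    and G_mono: "mono G"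
    and G_bot: "(G \<longlongrightarrow> 0) at_bot"
    and G_top: "(G \<longlongrightarrow> 1) at_top"
    and G_cont: "continuous_on UNIV G"
    and g_pos: "\<And>y. lG G < ereal y \<Longrightarrow> ereal y < rG G \<Longrightarrow> g y > 0"
    and g_cont: "continuous_on {y. lG G < ereal y \<and> ereal y < rG G} g"
    and g_decr: "strict_antimono_on {y. lG G < ereal y \<and> ereal y < rG G} g"
    and g_lim: "(g \<longlongrightarrow> 0) (at_rG G)"
  shows "(\<forall>s t. lG G < ereal s \<and> s < t \<and> ereal t < rG G \<longrightarrow>
            cond_exp G k g s t = g t powr (real k / (real k + 1)) * g s powr (1 / (real k + 1)))
         \<longleftrightarrow>
         (\<exists>c>0. \<forall>y. lG G < ereal y \<and> ereal y < rG G \<longrightarrow>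
            G y = 1 - exp (- c * (g y powr (- 1 / (real k + 1))
                   - Lim (at_lG G) (\<lambda>z. g z powr (- 1 / (real k + 1))))))"
  proof
  assume L: "\<forall>s t. lG G < ereal s \<and> s < t \<and> ereal t < rG G \<longrightarrow>
            cond_exp G k g s t = g t powr (real k / (real k + 1)) * g s powr (1 / (real k + 1))"
  have k1: "1 \<le> k" using k1 .
  show "\<exists>c>0. \<forall>y. lG G < ereal y \<and> ereal y < rG G \<longrightarrow>
            G y = 1 - exp (- c * (g y powr (- 1 / (real k + 1))
                   - Lim (at_lG G) (\<lambda>z. g z powr (- 1 / (real k + 1)))))"
    by (rule forward[OF k1 G_mono G_bot G_top G_cont g_pos g_cont g_decr]) (use L in auto)
next
  assume "\<exists>c>0. \<forall>y. lG G < ereal y \<and> ereal y < rG G \<longrightarrow>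
            G y = 1 - exp (- c * (g y powr (- 1 / (real k + 1))
                   - Lim (at_lG G) (\<lambda>z. g z powr (- 1 / (real k + 1)))))"
  then obtain c where c: "c > 0" and f: "\<And>y. lG G < ereal y \<and> ereal y < rG G \<Longrightarrow>
            G y = 1 - exp (- c * (g y powr (- 1 / (real k + 1))
                   - Lim (at_lG G) (\<lambda>z. g z powr (- 1 / (real k + 1)))))" by blast
  show "\<forall>s t. lG G < ereal s \<and> s < t \<and> ereal t < rG G \<longrightarrow>
            cond_exp G k g s t = g t powr (real k / (real k + 1)) * g s powr (1 / (real k + 1))"
  proof (intro allI impI)
    fix s t assume st: "lG G < ereal s \<and> s < t \<and> ereal t < rG G"
    show "cond_exp G k g s t = g t powr (real k / (real k + 1)) * g s powr (1 / (real k + 1))"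
      by (rule backward[OF k1 G_mono G_bot G_top G_cont g_pos g_decr c f]) (use st in auto)
  qed
qed

end
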